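(* Let $\alpha=(\alpha_1,\dots,\alpha_k)$ be an integer composition of $n>0$ and let $\max(\alpha)$ be its largest part. Then the parabolic Tamari lattice $\mathrm{Tam}(\alpha)$ has order dimension $n-\max(\alpha)$.
   Context: The $\alpha$-regions are the sets $\{\alpha_1+\dots+\alpha_{i-1}+1,\dots,\alpha_1+\dots+\alpha_i\}$, $i\in[k]$, of nodes in $[n]$. An $\alpha$-arc is a pair $w_{a,b}=(a,b)$ with $1\le a<b\le n$ and $a,b$ in different $\alpha$-regions. Let $G_\alpha$ be the directed graph on $\alpha$-arcs with an edge $w_{a_1,b_1}\to w_{a_2,b_2}$ between distinct arcs whenever either $a_1,a_2$ are in the same $\alpha$-region and $a_1\le a_2<b_2\le b_1$, or $a_1,a_2$ are in different $\alpha$-regions, $a_2<a_1<b_2\le b_1$, and $a_1,b_2$ are in different $\alpha$-regions. For a directed graph $G$, a maximal orthogonal pair is a pair $(X,Y)$ of disjoint vertex subsets with no edge from $X$ to $Y$, maximal for this property; ordered by $X\subseteq X'$ they form a lattice $L(G)$. $\mathrm{Tam}(\alpha):=L(G_\alpha)$ (the extremal lattice with Galois graph $G_\alpha$). The order dimension of a poset is the least $d$ such that it embeds as a subposet of $\mathbb R^d$ with the componentwise order. *)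

theory Defs
  imports Main "HOL.Real"
begin

text \<open>Integer composition alpha = (alpha_1,...,alpha_k) is a list of positive naturals.
  Regions are 0-indexed here: region i = {alpha_1+...+alpha_i + 1 .. alpha_1+...+alpha_(i+1)}.\<close>

definition is_composition :: "nat list \<Rightarrow> nat \<Rightarrow> bool" where
  "is_composition \<alpha> n \<longleftrightarrow> (\<forall>p\<in>set \<alpha>. 0 < p) \<and> sum_list \<alpha> = n"

definition alpha_region :: "nat list \<Rightarrow> nat \<Rightarrow> nat set" where
  "alpha_region \<alpha> i = {sum_list (take i \<alpha>) + 1 .. sum_list (take (Suc i) \<alpha>)}"

definition same_region :: "nat list \<Rightarrow> nat \<Rightarrow> nat \<Rightarrow> bool" where
  "same_region \<alpha> a b \<longleftrightarrow> (\<exists>i<length \<alpha>. a \<in> alpha_region \<alpha> i \<and> b \<in> alpha_region \<alpha> i)"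

definition alpha_arcs :: "nat list \<Rightarrow> (nat \<times> nat) set" where
  "alpha_arcs \<alpha> = {(a, b). 1 \<le> a \<and> a < b \<and> b \<le> sum_list \<alpha> \<and> \<not> same_region \<alpha> a b}"

definition alpha_edge :: "nat list \<Rightarrow> nat \<times> nat \<Rightarrow> nat \<times> nat \<Rightarrow> bool" where
  "alpha_edge \<alpha> w1 w2 \<longleftrightarrow>
     w1 \<in> alpha_arcs \<alpha> \<and> w2 \<in> alpha_arcs \<alpha> \<and> w1 \<noteq> w2 \<and>
     (let a1 = fst w1; b1 = snd w1; a2 = fst w2; b2 = snd w2 in
       (same_region \<alpha> a1 a2 \<and> a1 \<le> a2 \<and> a2 < b2 \<and> b2 \<le> b1) \<or>
       (\<not> same_region \<alpha> a1 a2 \<and> a2 < a1 \<and> a1 < b2 \<and> b2 \<le> b1 \<and> \<not> same_region \<alpha> a1 b2))"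

definition orthogonal_pair :: "'v set \<Rightarrow> ('v \<Rightarrow> 'v \<Rightarrow> bool) \<Rightarrow> 'v set \<Rightarrow> 'v set \<Rightarrow> bool" where
  "orthogonal_pair V E X Y \<longleftrightarrow> X \<subseteq> V \<and> Y \<subseteq> V \<and> X \<inter> Y = {} \<and> (\<forall>x\<in>X. \<forall>y\<in>Y. \<not> E x y)"

definition max_orthogonal_pair :: "'v set \<Rightarrow> ('v \<Rightarrow> 'v \<Rightarrow> bool) \<Rightarrow> 'v set \<Rightarrow> 'v set \<Rightarrow> bool" where
  "max_orthogonal_pair V E X Y \<longleftrightarrow> orthogonal_pair V E X Y \<and>
     (\<forall>X' Y'. orthogonal_pair V E X' Y' \<and> X \<subseteq> X' \<and> Y \<subseteq> Y' \<longrightarrow> X' = X \<and> Y' = Y)"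

definition mop_lattice :: "'v set \<Rightarrow> ('v \<Rightarrow> 'v \<Rightarrow> bool) \<Rightarrow> ('v set \<times> 'v set) set" where
  "mop_lattice V E = {(X, Y). max_orthogonal_pair V E X Y}"

definition mop_le :: "('v set \<times> 'v set) \<Rightarrow> ('v set \<times> 'v set) \<Rightarrow> bool" where
  "mop_le p q \<longleftrightarrow> fst p \<subseteq> fst q"

definition Tam :: "nat list \<Rightarrow> ((nat \<times> nat) set \<times> (nat \<times> nat) set) set" where
  "Tam \<alpha> = mop_lattice (alpha_arcs \<alpha>) (alpha_edge \<alpha>)"

text \<open>Order dimension: least d such that the poset embeds into R^d (componentwise order).
  Points of R^d are represented as functions nat \<Rightarrow> real, only coordinates < d matter.\<close>

definition embeds_in_Rd :: "'a set \<Rightarrow> ('a \<Rightarrow> 'a \<Rightarrow> bool) \<Rightarrow> nat \<Rightarrow> bool" where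
  "embeds_in_Rd P le d \<longleftrightarrow> (\<exists>f :: 'a \<Rightarrow> nat \<Rightarrow> real.
      inj_on f P \<and> (\<forall>x\<in>P. \<forall>y\<in>P. le x y \<longleftrightarrow> (\<forall>i<d. f x i \<le> f y i)))"

definition order_dimension :: "'a set \<Rightarrow> ('a \<Rightarrow> 'a \<Rightarrow> bool) \<Rightarrow> nat" where
  "order_dimension P le = (LEAST d. embeds_in_Rd P le d)"

end

theory Submission
  imports Defs
begin


definition Yop :: "'v set \<Rightarrow> ('v \<Rightarrow> 'v \<Rightarrow> bool) \<Rightarrow> 'v set \<Rightarrow> 'v set" where
  "Yop V E X = {y\<in>V. \<forall>x\<in>X. x \<noteq> y \<and> \<not> E x y}"

definition Xop :: "'v set \<Rightarrow> ('v \<Rightarrow> 'v \<Rightarrow> bool) \<Rightarrow> 'v set \<Rightarrow> 'v set" where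
  "Xop V E Y = {x\<in>V. \<forall>y\<in>Y. x \<noteq> y \<and> \<not> E x y}"

lemma mop_iff:
  "max_orthogonal_pair V E X Y \<longleftrightarrow> X = Xop V E Y \<and> Y = Yop V E X"
proof
  assume m: "max_orthogonal_pair V E X Y"
  hence o: "orthogonal_pair V E X Y" by (simp add: max_orthogonal_pair_def)
  have mx: "\<And>X' Y'. orthogonal_pair V E X' Y' \<Longrightarrow> X \<subseteq> X' \<Longrightarrow> Y \<subseteq> Y' \<Longrightarrow> X' = X \<and> Y' = Y"
    using m by (simp add: max_orthogonal_pair_def)
  have "orthogonal_pair V E (Xop V E Y) Y" using o unfolding orthogonal_pair_def Xop_def by auto
  moreover have "X \<subseteq> Xop V E Y" using o unfolding orthogonal_pair_def Xop_def by auto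
  ultimately have 1: "X = Xop V E Y" using mx by blast
  have "orthogonal_pair V E X (Yop V E X)" using o unfolding orthogonal_pair_def Yop_def by auto
  moreover have "Y \<subseteq> Yop V E X" using o unfolding orthogonal_pair_def Yop_def by auto
  ultimately have 2: "Y = Yop V E X" using mx by blast
  show "X = Xop V E Y \<and> Y = Yop V E X" using 1 2 by simp
next
  assume a: "X = Xop V E Y \<and> Y = Yop V E X"
  hence o: "orthogonal_pair V E X Y" unfolding orthogonal_pair_def Xop_def Yop_def by blast
  have "\<forall>X' Y'. orthogonal_pair V E X' Y' \<and> X \<subseteq> X' \<and> Y \<subseteq> Y' \<longrightarrow> X' = X \<and> Y' = Y"
  proof (intro allI impI)
    fix X' Y' assume b: "orthogonal_pair V E X' Y' \<and> X \<subseteq> X' \<and> Y \<subseteq> Y'"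
    have "X' \<subseteq> Xop V E Y" using b unfolding orthogonal_pair_def Xop_def by blast
    moreover have "Y' \<subseteq> Yop V E X" using b unfolding orthogonal_pair_def Yop_def by blast
    ultimately show "X' = X \<and> Y' = Y" using a b by blast
  qed
  thus "max_orthogonal_pair V E X Y" using o unfolding max_orthogonal_pair_def by blast
qed

lemma Yop_anti: "X \<subseteq> X' \<Longrightarrow> Yop V E X' \<subseteq> Yop V E X"
  unfolding Yop_def by blast

lemma Xop_anti: "Y \<subseteq> Y' \<Longrightarrow> Xop V E Y' \<subseteq> Xop V E Y"
  unfolding Xop_def by blast

lemma YXY: "X \<subseteq> V \<Longrightarrow> Yop V E (Xop V E (Yop V E X)) = Yop V E X"
  unfolding Yop_def Xop_def by blast

lemma XYX: "Y \<subseteq> V \<Longrightarrow> Xop V E (Yop V E (Xop V E Y)) = Xop V E Y"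
  unfolding Yop_def Xop_def by blast

lemma Xop_sub: "Xop V E Y \<subseteq> V" unfolding Xop_def by blast
lemma Yop_sub: "Yop V E X \<subseteq> V" unfolding Yop_def by blast

lemma mop_cong:
  assumes "\<And>x y. x \<in> V \<Longrightarrow> y \<in> V \<Longrightarrow> E x y = E' x y"
  shows "max_orthogonal_pair V E X Y = max_orthogonal_pair V E' X Y"
proof -
  have *: "Y \<subseteq> V \<Longrightarrow> Xop V E Y = Xop V E' Y" for Y
    using assms unfolding Xop_def by blast
  have **: "X \<subseteq> V \<Longrightarrow> Yop V E X = Yop V E' X" for X
    using assms unfolding Yop_def by blast
  show ?thesis unfolding mop_iff
  proof
    assume a: "X = Xop V E Y \<and> Y = Yop V E X"
    hence "X \<subseteq> V" "Y \<subseteq> V" using Xop_sub Yop_sub by metis+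
    thus "X = Xop V E' Y \<and> Y = Yop V E' X" using a * ** by metis
  next
    assume a: "X = Xop V E' Y \<and> Y = Yop V E' X"
    hence "X \<subseteq> V" "Y \<subseteq> V" using Xop_sub Yop_sub by metis+
    thus "X = Xop V E Y \<and> Y = Yop V E X" using a * ** by metis
  qed
qed

lemma mop_unique:
  assumes "max_orthogonal_pair V E X Y" "max_orthogonal_pair V E X Y'"
  shows "Y = Y'"
  using assms mop_iff by metis

lemma mop_le_iff_Y:
  assumes "max_orthogonal_pair V E X Y" "max_orthogonal_pair V E X2 Y2" "X \<subseteq> X2"
  shows "Y2 \<subseteq> Y"
  using assms mop_iff Yop_anti by metis

lemma std_example:
  fixes f :: "'a \<Rightarrow> nat \<Rightarrow> real"
  assumes emb: "\<forall>x\<in>P. \<forall>y\<in>P. le x y \<longleftrightarrow> (\<forall>i<d. f x i \<le> f y i)"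
    and fin: "finite I" and card: "d < card I"
    and AP: "\<And>u. u \<in> I \<Longrightarrow> A u \<in> P" and BP: "\<And>u. u \<in> I \<Longrightarrow> B u \<in> P"
    and nle: "\<And>u. u \<in> I \<Longrightarrow> \<not> le (A u) (B u)"
    and le: "\<And>u v. u \<in> I \<Longrightarrow> v \<in> I \<Longrightarrow> u \<noteq> v \<Longrightarrow> le (A u) (B v)"
  shows False
proof -
  have "\<forall>u\<in>I. \<exists>i<d. f (B u) i < f (A u) i"
  proof
    fix u assume u: "u \<in> I"
    have "\<not> (\<forall>i<d. f (A u) i \<le> f (B u) i)" using emb AP[OF u] BP[OF u] nle[OF u] by blast
    thus "\<exists>i<d. f (B u) i < f (A u) i" by (auto simp: not_le)
  qed
  then obtain c where c: "\<And>u. u \<in> I \<Longrightarrow> c u < d \<and> f (B u) (c u) < f (A u) (c u)"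
    by metis
  have "\<not> inj_on c I"
  proof
    assume "inj_on c I"
    moreover have "c ` I \<subseteq> {..<d}" using c by auto
    ultimately have "card I \<le> card {..<d}" using card_inj_on_le by blast
    thus False using card by simp
  qed
  then obtain u v where uv: "u \<in> I" "v \<in> I" "u \<noteq> v" "c u = c v"
    unfolding inj_on_def by blast
  let ?i = "c u"
  have 1: "f (B u) ?i < f (A u) ?i" using c[of u] uv by simp
  have 2: "f (B v) ?i < f (A v) ?i" using c[of v] uv by simp
  have 3: "f (A v) ?i \<le> f (B u) ?i"
    using emb AP BP le[of v u] uv c by auto
  have 4: "f (A u) ?i \<le> f (B v) ?i"
    using emb AP BP le[of u v] uv c by auto
  show False using 1 2 3 4 by linarith
qed



definition arcsG :: "(nat \<Rightarrow> nat) \<Rightarrow> nat \<Rightarrow> nat \<Rightarrow> (nat \<times> nat) set" where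
  "arcsG r lo hi = {(a,b). lo \<le> a \<and> a < b \<and> b \<le> hi \<and> r a \<noteq> r b}"

definition econd :: "(nat \<Rightarrow> nat) \<Rightarrow> nat \<times> nat \<Rightarrow> nat \<times> nat \<Rightarrow> bool" where
  "econd r w1 w2 \<longleftrightarrow> w1 \<noteq> w2 \<and>
     ((r (fst w1) = r (fst w2) \<and> fst w1 \<le> fst w2 \<and> fst w2 < snd w2 \<and> snd w2 \<le> snd w1) \<or>
      (r (fst w1) \<noteq> r (fst w2) \<and> fst w2 < fst w1 \<and> fst w1 < snd w2 \<and> snd w2 \<le> snd w1 \<and> r (fst w1) \<noteq> r (snd w2)))"

lemma econd_simp[simp]:
  "econd r (a1,b1) (a2,b2) \<longleftrightarrow> (a1,b1) \<noteq> (a2,b2) \<and>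
     ((r a1 = r a2 \<and> a1 \<le> a2 \<and> a2 < b2 \<and> b2 \<le> b1) \<or>
      (r a1 \<noteq> r a2 \<and> a2 < a1 \<and> a1 < b2 \<and> b2 \<le> b1 \<and> r a1 \<noteq> r b2))"
  by (simp add: econd_def)

lemma arcsG_mem[simp]: "(a,b) \<in> arcsG r lo hi \<longleftrightarrow> lo \<le> a \<and> a < b \<and> b \<le> hi \<and> r a \<noteq> r b"
  by (simp add: arcsG_def)

lemma finite_arcsG: "finite (arcsG r lo hi)"
proof -
  have "arcsG r lo hi \<subseteq> {lo..hi} \<times> {lo..hi}" by (auto simp: arcsG_def)
  thus ?thesis by (rule finite_subset) simp
qed

abbreviation MP :: "(nat \<Rightarrow> nat) \<Rightarrow> nat \<Rightarrow> nat \<Rightarrow> (nat \<times> nat) set \<Rightarrow> (nat \<times> nat) set \<Rightarrow> bool" where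
  "MP r lo hi X Y \<equiv> max_orthogonal_pair (arcsG r lo hi) (econd r) X Y"

definition XsG :: "(nat \<Rightarrow> nat) \<Rightarrow> nat \<Rightarrow> nat \<Rightarrow> (nat \<times> nat) set set" where
  "XsG r lo hi = {X. \<exists>Y. MP r lo hi X Y}"

lemma MP_X: assumes "max_orthogonal_pair V E X Y" shows "x \<in> X \<longleftrightarrow> x \<in> V \<and> (\<forall>y\<in>Y. x \<noteq> y \<and> \<not> E x y)"
proof -
  have "X = Xop V E Y" using mop_iff[THEN iffD1, OF assms] by (rule conjunct1)
  hence "x \<in> X \<longleftrightarrow> x \<in> Xop V E Y" by (rule arg_cong)
  thus ?thesis unfolding Xop_def by simp
qed

lemma MP_Y: assumes "max_orthogonal_pair V E X Y" shows "y \<in> Y \<longleftrightarrow> y \<in> V \<and> (\<forall>x\<in>X. x \<noteq> y \<and> \<not> E x y)"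
proof -
  have "Y = Yop V E X" using mop_iff[THEN iffD1, OF assms] by (rule conjunct2)
  hence "y \<in> Y \<longleftrightarrow> y \<in> Yop V E X" by (rule arg_cong)
  thus ?thesis unfolding Yop_def by simp
qed

lemma MP_orth: assumes "max_orthogonal_pair V E X Y" "x \<in> X" "y \<in> Y" shows "x \<noteq> y \<and> \<not> E x y"
  using MP_X[OF assms(1), of x] assms(2,3) by blast

lemma MP_subV: assumes "max_orthogonal_pair V E X Y" shows "X \<subseteq> V \<and> Y \<subseteq> V"
  using MP_X[OF assms] MP_Y[OF assms] by blast

lemma mono_lt: assumes "mono r" "r a < r b" shows "a < (b::nat)"
proof (rule ccontr)
  assume "\<not> a < b"
  hence "b \<le> a" by simp
  hence "r b \<le> r a" using monoD[OF assms(1)] by blast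
  thus False using assms(2) by simp
qed

section \<open>Removing the first node\<close>

lemma proj_lo:
  assumes mono: "mono r" and m: "MP r lo hi X Y"
  shows "MP r (Suc lo) hi (X \<inter> arcsG r (Suc lo) hi) (Y \<inter> arcsG r (Suc lo) hi)"
proof -
  let ?V = "arcsG r lo hi" and ?V' = "arcsG r (Suc lo) hi"
  have VV: "?V' \<subseteq> ?V" by (auto simp: arcsG_def)
  have notV': "w \<in> ?V \<Longrightarrow> w \<notin> ?V' \<Longrightarrow> fst w = lo" for w by (cases w) auto
  have X1: "X \<inter> ?V' = Xop ?V' (econd r) (Y \<inter> ?V')"
  proof
    show "X \<inter> ?V' \<subseteq> Xop ?V' (econd r) (Y \<inter> ?V')"
      using MP_orth[OF m] unfolding Xop_def by blast
  next
    show "Xop ?V' (econd r) (Y \<inter> ?V') \<subseteq> X \<inter> ?V'"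
    proof
      fix x assume xin: "x \<in> Xop ?V' (econd r) (Y \<inter> ?V')"
      hence xV': "x \<in> ?V'" and xn: "\<forall>y\<in>Y \<inter> ?V'. x \<noteq> y \<and> \<not> econd r x y" unfolding Xop_def by auto
      show "x \<in> X \<inter> ?V'"
      proof (rule ccontr)
        assume "x \<notin> X \<inter> ?V'"
        hence "x \<notin> X" using xV' by blast
        then obtain y where yY: "y \<in> Y" and xy: "x = y \<or> econd r x y"
          using MP_X[OF m, of x] xV' VV by blast
        have yV: "y \<in> ?V" using yY MP_subV[OF m] by blast
        have "y \<notin> ?V'" using xn yY xy by blast
        hence yl: "fst y = lo" using notV' yV by blast
        obtain a1 b1 where x: "x = (a1,b1)" by (cases x)
        obtain b where y: "y = (lo,b)" using yl by (cases y) auto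
        have a1: "Suc lo \<le> a1" "a1 < b1" "b1 \<le> hi" "r a1 \<noteq> r b1" using xV' x by auto
        have yb: "lo < b" "b \<le> hi" "r lo \<noteq> r b" using yV y by auto
        have D: "lo < a1 \<and> a1 < b \<and> b \<le> b1 \<and> r a1 \<noteq> r lo \<and> r a1 \<noteq> r b"
          using xy x y a1 by auto
        let ?z = "(a1, b)"
        have zV': "?z \<in> ?V'" using D a1 yb by auto
        have zY: "?z \<in> Y"
        proof -
          have "\<forall>x'\<in>X. x' \<noteq> ?z \<and> \<not> econd r x' ?z"
          proof
            fix x' assume x'X: "x' \<in> X"
            obtain a' b' where x': "x' = (a',b')" by (cases x')
            have x'V: "lo \<le> a'" "a' < b'" "b' \<le> hi" "r a' \<noteq> r b'" using x'X x' MP_subV[OF m] by auto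
            have ny: "\<not> econd r x' y" using MP_orth[OF m x'X yY] by blast
            show "x' \<noteq> ?z \<and> \<not> econd r x' ?z"
            proof
              show "x' \<noteq> ?z"
              proof
                assume "x' = ?z"
                hence "econd r x' y" using D y by auto
                thus False using ny by blast
              qed
            next
              show "\<not> econd r x' ?z"
              proof
                assume e: "econd r x' ?z"
                have "econd r x' y"
                proof (cases "r a' = r a1")
                  case True
                  hence "a' \<le> a1 \<and> b \<le> b'" using e x' D by auto
                  moreover have "a' \<noteq> lo" using True D by auto
                  ultimately show ?thesis using x' y True D x'V by auto
                next
                  case False
                  hence c: "a1 < a' \<and> b \<le> b' \<and> r a' \<noteq> r b \<and> a' < b" using e x' by auto
                  have "r lo \<le> r a1" "r a1 \<le> r a'" using monoD[OF mono, of lo a1] monoD[OF mono, of a1 a'] D c by auto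
                  hence "r a' \<noteq> r lo" using D False by auto
                  thus ?thesis using x' y c D by auto
                qed
                thus False using ny by blast
              qed
            qed
          qed
          thus ?thesis using MP_Y[OF m, of ?z] zV' VV by blast
        qed
        have "x = ?z \<or> econd r x ?z" using x D a1 by auto
        thus False using xn zY zV' by blast
      qed
    qed
  qed
  have Y1: "Y \<inter> ?V' = Yop ?V' (econd r) (X \<inter> ?V')"
  proof
    show "Y \<inter> ?V' \<subseteq> Yop ?V' (econd r) (X \<inter> ?V')"
      using MP_orth[OF m] unfolding Yop_def by blast
  next
    show "Yop ?V' (econd r) (X \<inter> ?V') \<subseteq> Y \<inter> ?V'"
    proof
      fix y assume yin: "y \<in> Yop ?V' (econd r) (X \<inter> ?V')"
      hence yV': "y \<in> ?V'" and yn: "\<forall>x\<in>X \<inter> ?V'. x \<noteq> y \<and> \<not> econd r x y" unfolding Yop_def by auto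
      show "y \<in> Y \<inter> ?V'"
      proof (rule ccontr)
        assume "y \<notin> Y \<inter> ?V'"
        hence "y \<notin> Y" using yV' by blast
        then obtain x where xX: "x \<in> X" and xy: "x = y \<or> econd r x y"
          using MP_Y[OF m, of y] yV' VV by blast
        have xV: "x \<in> ?V" using xX MP_subV[OF m] by blast
        have "x \<notin> ?V'" using yn xX xy by blast
        hence xl: "fst x = lo" using notV' xV by blast
        obtain a2 b2 where y: "y = (a2,b2)" by (cases y)
        obtain b1 where x: "x = (lo,b1)" using xl by (cases x) auto
        have a2: "Suc lo \<le> a2" "a2 < b2" "b2 \<le> hi" "r a2 \<noteq> r b2" using yV' y by auto
        have xb: "lo < b1" "b1 \<le> hi" "r lo \<noteq> r b1" using xV x by auto
        have S: "r lo = r a2 \<and> b2 \<le> b1" using xy x y a2 by auto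
        let ?z = "(a2, b1)"
        have zV': "?z \<in> ?V'" using S a2 xb by auto
        have zX: "?z \<in> X"
        proof -
          have "\<forall>y'\<in>Y. ?z \<noteq> y' \<and> \<not> econd r ?z y'"
          proof
            fix y' assume y'Y: "y' \<in> Y"
            obtain a3 b3 where y': "y' = (a3,b3)" by (cases y')
            have y'V: "lo \<le> a3" "a3 < b3" "b3 \<le> hi" "r a3 \<noteq> r b3" using y'Y y' MP_subV[OF m] by auto
            have nx: "\<not> econd r x y'" using MP_orth[OF m xX y'Y] by blast
            show "?z \<noteq> y' \<and> \<not> econd r ?z y'"
            proof
              show "?z \<noteq> y'"
              proof
                assume "?z = y'"
                hence "econd r x y'" using S x a2 by auto
                thus False using nx by blast
              qed
            next
              show "\<not> econd r ?z y'"
              proof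
                assume e: "econd r ?z y'"
                have "econd r x y'"
                proof (cases "r a2 = r a3")
                  case True
                  hence "a2 \<le> a3 \<and> b3 \<le> b1" using e y' by auto
                  thus ?thesis using x y' True S a2 y'V by auto
                next
                  case False
                  hence c: "a3 < a2" using e y' by auto
                  have "r lo \<le> r a3" "r a3 \<le> r a2" using monoD[OF mono, of lo a3] monoD[OF mono, of a3 a2] c y'V by auto
                  hence False using S False by auto
                  thus ?thesis by blast
                qed
                thus False using nx by blast
              qed
            qed
          qed
          thus ?thesis using MP_X[OF m, of ?z] zV' VV by blast
        qed
        have "?z = y \<or> econd r ?z y" using y S a2 by auto
        thus False using yn zX zV' by blast
      qed
    qed
  qed
  show ?thesis unfolding mop_iff using X1 Y1 by blast
qed

lemma row_lo_down:
  assumes m: "MP r lo hi X Y" and x: "(lo,b') \<in> X" and b: "(lo,b) \<in> arcsG r lo hi" "b < b'"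
  shows "(lo,b) \<in> X"
proof (rule ccontr)
  assume "(lo,b) \<notin> X"
  then obtain y where yY: "y \<in> Y" and e: "(lo,b) = y \<or> econd r (lo,b) y"
    using MP_X[OF m, of "(lo,b)"] b by blast
  obtain a2 b2 where y: "y = (a2,b2)" by (cases y)
  have yV: "lo \<le> a2" "a2 < b2" "b2 \<le> hi" "r a2 \<noteq> r b2" using yY y MP_subV[OF m] by auto
  have "econd r (lo,b') y" using e y yV b by auto
  thus False using MP_orth[OF m x yY] by blast
qed



section \<open>Removing the last node\<close>

lemma proj_hi:
  assumes mono: "mono r" and m: "MP r lo (Suc h) X Y"
  shows "MP r lo h (X \<inter> arcsG r lo h) (Y \<inter> arcsG r lo h)"
proof -
  let ?V = "arcsG r lo (Suc h)" and ?V' = "arcsG r lo h"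
  have VV: "?V' \<subseteq> ?V" by (auto simp: arcsG_def)
  have notV': "w \<in> ?V \<Longrightarrow> w \<notin> ?V' \<Longrightarrow> snd w = Suc h" for w by (cases w) auto
  have X1: "X \<inter> ?V' = Xop ?V' (econd r) (Y \<inter> ?V')"
  proof
    show "X \<inter> ?V' \<subseteq> Xop ?V' (econd r) (Y \<inter> ?V')"
      using MP_orth[OF m] unfolding Xop_def by blast
  next
    show "Xop ?V' (econd r) (Y \<inter> ?V') \<subseteq> X \<inter> ?V'"
    proof
      fix x assume xin: "x \<in> Xop ?V' (econd r) (Y \<inter> ?V')"
      hence xV': "x \<in> ?V'" and xn: "\<forall>y\<in>Y \<inter> ?V'. x \<noteq> y \<and> \<not> econd r x y" unfolding Xop_def by auto
      show "x \<in> X \<inter> ?V'"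
      proof (rule ccontr)
        assume "x \<notin> X \<inter> ?V'"
        hence "x \<notin> X" using xV' by blast
        then obtain y where yY: "y \<in> Y" and xy: "x = y \<or> econd r x y"
          using MP_X[OF m, of x] xV' VV by blast
        have yV: "y \<in> ?V" using yY MP_subV[OF m] by blast
        have "y \<notin> ?V'" using xn yY xy by blast
        hence yl: "snd y = Suc h" using notV' yV by blast
        obtain a1 b1 where x: "x = (a1,b1)" by (cases x)
        obtain a2 where y: "y = (a2, Suc h)" using yl by (cases y) auto
        have "b1 \<le> h" using xV' x by auto
        thus False using xy x y by auto
      qed
    qed
  qed
  have Y1: "Y \<inter> ?V' = Yop ?V' (econd r) (X \<inter> ?V')"
  proof
    show "Y \<inter> ?V' \<subseteq> Yop ?V' (econd r) (X \<inter> ?V')"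
      using MP_orth[OF m] unfolding Yop_def by blast
  next
    show "Yop ?V' (econd r) (X \<inter> ?V') \<subseteq> Y \<inter> ?V'"
    proof
      fix y assume yin: "y \<in> Yop ?V' (econd r) (X \<inter> ?V')"
      hence yV': "y \<in> ?V'" and yn: "\<forall>x\<in>X \<inter> ?V'. x \<noteq> y \<and> \<not> econd r x y" unfolding Yop_def by auto
      show "y \<in> Y \<inter> ?V'"
      proof (rule ccontr)
        assume "y \<notin> Y \<inter> ?V'"
        hence "y \<notin> Y" using yV' by blast
        then obtain x where xX: "x \<in> X" and xy: "x = y \<or> econd r x y"
          using MP_Y[OF m, of y] yV' VV by blast
        have xV: "x \<in> ?V" using xX MP_subV[OF m] by blast
        have "x \<notin> ?V'" using yn xX xy by blast
        hence xl: "snd x = Suc h" using notV' xV by blast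
        obtain a2 b2 where y: "y = (a2,b2)" by (cases y)
        obtain a1 where x: "x = (a1, Suc h)" using xl by (cases x) auto
        have a2: "lo \<le> a2" "a2 < b2" "b2 \<le> h" "r a2 \<noteq> r b2" using yV' y by auto
        have a1: "lo \<le> a1" "a1 < Suc h" "r a1 \<noteq> r (Suc h)" using xV x by auto
        have E: "econd r x y" using xy x y a2 by auto
        let ?z = "(a1, b2)"
        have zc: "a1 < b2 \<and> r a1 \<noteq> r b2" using E x y a2 by auto
        have zV': "?z \<in> ?V'" using zc a1 a2 by auto
        have zy: "?z = y \<or> econd r ?z y" using E x y a2 zc by auto
        have zX: "?z \<in> X"
        proof -
          have "\<forall>y'\<in>Y. ?z \<noteq> y' \<and> \<not> econd r ?z y'"
          proof
            fix y' assume y'Y: "y' \<in> Y"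
            obtain a3 b3 where y': "y' = (a3,b3)" by (cases y')
            have y'V: "lo \<le> a3" "a3 < b3" "b3 \<le> Suc h" "r a3 \<noteq> r b3" using y'Y y' MP_subV[OF m] by auto
            have nx: "\<not> econd r x y'" using MP_orth[OF m xX y'Y] by blast
            show "?z \<noteq> y' \<and> \<not> econd r ?z y'"
            proof
              show "?z \<noteq> y'"
              proof
                assume "?z = y'"
                hence "econd r x y'" using x a2 zc by auto
                thus False using nx by blast
              qed
            next
              show "\<not> econd r ?z y'"
              proof
                assume e: "econd r ?z y'"
                have "econd r x y'" using e x y' a2 by auto
                thus False using nx by blast
              qed
            qed
          qed
          thus ?thesis using MP_X[OF m, of ?z] zV' VV by blast
        qed
        show False using yn zX zV' zy by blast
      qed
    qed
  qed
  show ?thesis unfolding mop_iff using X1 Y1 by blast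
qed

lemma col_up:
  assumes mono: "mono r" and m: "MP r lo hi X Y" and aY: "(a,hi) \<in> Y"
    and a'V: "(a',hi) \<in> arcsG r lo hi" and ord: "r a < r a' \<or> (r a' = r a \<and> a' < a)"
  shows "(a',hi) \<in> Y"
proof (rule ccontr)
  assume "(a',hi) \<notin> Y"
  then obtain x where xX: "x \<in> X" and xy: "x = (a',hi) \<or> econd r x (a',hi)"
    using MP_Y[OF m, of "(a',hi)"] a'V by blast
  have aV: "lo \<le> a" "a < hi" "r a \<noteq> r hi" using aY MP_subV[OF m] by auto
  have a'V2: "lo \<le> a'" "a' < hi" "r a' \<noteq> r hi" using a'V by auto
  obtain a1 b1 where x: "x = (a1,b1)" by (cases x)
  have xV: "lo \<le> a1" "a1 < b1" "b1 \<le> hi" "r a1 \<noteq> r b1" using xX x MP_subV[OF m] by auto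
  have "econd r x (a,hi)"
  proof (cases "x = (a',hi)")
    case True
    hence x': "a1 = a'" "b1 = hi" using x by auto
    show ?thesis
    proof (cases "r a' = r a")
      case True
      hence "a' < a" using ord by auto
      thus ?thesis using x x' True aV by auto
    next
      case False
      hence "r a < r a'" using ord by auto
      hence "a < a'" using mono_lt[OF mono] by blast
      thus ?thesis using x x' False a'V2 aV by auto
    qed
  next
    case False
    hence e: "econd r x (a',hi)" using xy by blast
    have b1: "b1 = hi" using e x xV by auto
    show ?thesis
    proof (cases "r a1 = r a'")
      case True
      hence "a1 \<le> a'" using e x by auto
      show ?thesis
      proof (cases "r a = r a'")
        case True
        hence "a' < a" using ord by auto
        thus ?thesis using x b1 \<open>a1 \<le> a'\<close> \<open>r a1 = r a'\<close> True aV by auto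
      next
        case False
        hence "r a < r a1" using ord \<open>r a1 = r a'\<close> by auto
        hence "a < a1" using mono_lt[OF mono] by blast
        thus ?thesis using x b1 \<open>r a < r a1\<close> xV aV by auto
      qed
    next
      case False
      hence c: "a' < a1" "r a1 \<noteq> r hi" using e x b1 by auto
      have "r a' \<le> r a1" using monoD[OF mono, of a' a1] c by auto
      hence "r a' < r a1" using False by auto
      hence "r a < r a1" using ord by auto
      hence "a < a1" using mono_lt[OF mono] by blast
      thus ?thesis using x b1 \<open>r a < r a1\<close> xV aV c by auto
    qed
  qed
  thus False using MP_orth[OF m xX aY] by blast
qed

definition colG :: "(nat \<Rightarrow> nat) \<Rightarrow> nat \<Rightarrow> nat \<Rightarrow> (nat \<times> nat) set" where
  "colG r lo hi = {w \<in> arcsG r lo hi. snd w = hi}"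

definition rowG :: "(nat \<Rightarrow> nat) \<Rightarrow> nat \<Rightarrow> nat \<Rightarrow> (nat \<times> nat) set" where
  "rowG r lo hi = {w \<in> arcsG r lo hi. fst w = lo}"

lemma col_comparable:
  assumes mono: "mono r" and m: "MP r lo hi X Y" and m2: "MP r lo hi X2 Y2"
  shows "Y \<inter> colG r lo hi \<subseteq> Y2 \<inter> colG r lo hi \<or> Y2 \<inter> colG r lo hi \<subseteq> Y \<inter> colG r lo hi"
proof (rule ccontr)
  assume "\<not> ?thesis"
  then obtain u v where u: "u \<in> Y \<inter> colG r lo hi" "u \<notin> Y2" and v: "v \<in> Y2 \<inter> colG r lo hi" "v \<notin> Y"
    by blast
  obtain a where ua: "u = (a,hi)" using u unfolding colG_def by (cases u) auto
  obtain a' where va: "v = (a',hi)" using v unfolding colG_def by (cases v) auto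
  have uV: "u \<in> arcsG r lo hi" and vV: "v \<in> arcsG r lo hi" using u v unfolding colG_def by auto
  have "a \<noteq> a'" using u v ua va by auto
  hence "(r a < r a' \<or> (r a' = r a \<and> a' < a)) \<or> (r a' < r a \<or> (r a = r a' \<and> a < a'))" by auto
  thus False
  proof
    assume "r a < r a' \<or> (r a' = r a \<and> a' < a)"
    hence "(a',hi) \<in> Y" using col_up[OF mono m, of a a'] u ua vV va by auto
    thus False using v va by auto
  next
    assume "r a' < r a \<or> (r a = r a' \<and> a < a')"
    hence "(a,hi) \<in> Y2" using col_up[OF mono m2, of a' a] v va uV ua by auto
    thus False using u ua by auto
  qed
qed

lemma row_comparable:
  assumes m: "MP r lo hi X Y" and m2: "MP r lo hi X2 Y2"
  shows "X \<inter> rowG r lo hi \<subseteq> X2 \<inter> rowG r lo hi \<or> X2 \<inter> rowG r lo hi \<subseteq> X \<inter> rowG r lo hi"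
proof (rule ccontr)
  assume "\<not> ?thesis"
  then obtain u v where u: "u \<in> X \<inter> rowG r lo hi" "u \<notin> X2" and v: "v \<in> X2 \<inter> rowG r lo hi" "v \<notin> X"
    by blast
  obtain b where ua: "u = (lo,b)" using u unfolding rowG_def by (cases u) auto
  obtain b' where va: "v = (lo,b')" using v unfolding rowG_def by (cases v) auto
  have uV: "u \<in> arcsG r lo hi" and vV: "v \<in> arcsG r lo hi" using u v unfolding rowG_def by auto
  have "b \<noteq> b'" using u v ua va by auto
  hence "b < b' \<or> b' < b" by auto
  thus False
  proof
    assume "b < b'"
    hence "(lo,b) \<in> X2" using row_lo_down[OF m2, of b' b] v va uV ua by auto
    thus False using u ua by auto
  next
    assume "b' < b"
    hence "(lo,b') \<in> X" using row_lo_down[OF m, of b b'] u ua vV va by auto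
    thus False using v va by auto
  qed
qed

lemma card_le_iff_sub:
  assumes "finite A" "finite B" "A \<subseteq> B \<or> B \<subseteq> A"
  shows "card A \<le> card B \<longleftrightarrow> A \<subseteq> B"
proof
  assume c: "card A \<le> card B"
  show "A \<subseteq> B"
  proof (rule ccontr)
    assume "\<not> A \<subseteq> B"
    hence "B \<subset> A" using assms(3) by blast
    hence "card B < card A" using assms(1) psubset_card_mono by blast
    thus False using c by simp
  qed
next
  assume "A \<subseteq> B" thus "card A \<le> card B" using assms(2) by (rule card_mono[rotated])
qed



definition embX :: "(nat \<times> nat) set set \<Rightarrow> nat \<Rightarrow> ((nat \<times> nat) set \<Rightarrow> nat \<Rightarrow> real) \<Rightarrow> bool" where
  "embX P d f \<longleftrightarrow> (\<forall>X\<in>P. \<forall>X2\<in>P. X \<subseteq> X2 \<longleftrightarrow> (\<forall>i<d. f X i \<le> f X2 i))"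

lemma all_less_Suc: "(\<forall>i<Suc d. P i) \<longleftrightarrow> (\<forall>i<d. P i) \<and> P d"
  by (auto simp: less_Suc_eq)

lemma step_lo:
  assumes mono: "mono r" and emb: "embX (XsG r (Suc lo) hi) d f'"
  shows "\<exists>f. embX (XsG r lo hi) (Suc d) f"
proof -
  let ?V = "arcsG r lo hi" and ?V' = "arcsG r (Suc lo) hi" and ?R = "rowG r lo hi"
  define f where "f = (\<lambda>X i. if i < d then f' (X \<inter> ?V') i else real (card (X \<inter> ?R)))"
  have "embX (XsG r lo hi) (Suc d) f"
    unfolding embX_def
  proof (intro ballI)
    fix X X2 assume X: "X \<in> XsG r lo hi" and X2: "X2 \<in> XsG r lo hi"
    obtain Y where m: "MP r lo hi X Y" using X unfolding XsG_def by blast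
    obtain Y2 where m2: "MP r lo hi X2 Y2" using X2 unfolding XsG_def by blast
    have p: "X \<inter> ?V' \<in> XsG r (Suc lo) hi" using proj_lo[OF mono m] unfolding XsG_def by blast
    have p2: "X2 \<inter> ?V' \<in> XsG r (Suc lo) hi" using proj_lo[OF mono m2] unfolding XsG_def by blast
    have XV: "X \<subseteq> ?V" "X2 \<subseteq> ?V" using MP_subV[OF m] MP_subV[OF m2] by auto
    have split: "?V \<subseteq> ?V' \<union> ?R"
    proof
      fix w assume "w \<in> ?V"
      thus "w \<in> ?V' \<union> ?R" unfolding rowG_def by (cases w) auto
    qed
    have "X \<subseteq> X2 \<longleftrightarrow> (X \<inter> ?V' \<subseteq> X2 \<inter> ?V' \<and> X \<inter> ?R \<subseteq> X2 \<inter> ?R)"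
      using XV split by blast
    also have "(X \<inter> ?V' \<subseteq> X2 \<inter> ?V') \<longleftrightarrow> (\<forall>i<d. f' (X \<inter> ?V') i \<le> f' (X2 \<inter> ?V') i)"
      using bspec[OF bspec[OF emb[unfolded embX_def] p] p2] .
    also have "(X \<inter> ?R \<subseteq> X2 \<inter> ?R) \<longleftrightarrow> card (X \<inter> ?R) \<le> card (X2 \<inter> ?R)"
    proof -
      have fin: "finite (X \<inter> ?R)" "finite (X2 \<inter> ?R)"
        using finite_arcsG[of r lo hi] XV by (auto intro: finite_subset)
      show ?thesis using card_le_iff_sub[OF fin row_comparable[OF m m2]] by simp
    qed
    also have "((\<forall>i<d. f' (X \<inter> ?V') i \<le> f' (X2 \<inter> ?V') i) \<and> card (X \<inter> ?R) \<le> card (X2 \<inter> ?R))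
        \<longleftrightarrow> (\<forall>i<Suc d. f X i \<le> f X2 i)"
      unfolding all_less_Suc f_def by simp
    finally show "X \<subseteq> X2 \<longleftrightarrow> (\<forall>i<Suc d. f X i \<le> f X2 i)" .
  qed
  thus ?thesis by blast
qed

lemma step_hi:
  assumes mono: "mono r" and emb: "embX (XsG r lo h) d f'"
  shows "\<exists>f. embX (XsG r lo (Suc h)) (Suc d) f"
proof -
  let ?V = "arcsG r lo (Suc h)" and ?V' = "arcsG r lo h" and ?C = "colG r lo (Suc h)"
  define f where "f = (\<lambda>X i. if i < d then f' (X \<inter> ?V') i
      else - real (card (Yop ?V (econd r) X \<inter> ?C)))"
  have "embX (XsG r lo (Suc h)) (Suc d) f"
    unfolding embX_def
  proof (intro ballI)
    fix X X2 assume X: "X \<in> XsG r lo (Suc h)" and X2: "X2 \<in> XsG r lo (Suc h)"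
    obtain Y where m: "MP r lo (Suc h) X Y" using X unfolding XsG_def by blast
    obtain Y2 where m2: "MP r lo (Suc h) X2 Y2" using X2 unfolding XsG_def by blast
    have YY: "Yop ?V (econd r) X = Y" using mop_iff[THEN iffD1, OF m, THEN conjunct2] by (rule sym)
    have YY2: "Yop ?V (econd r) X2 = Y2" using mop_iff[THEN iffD1, OF m2, THEN conjunct2] by (rule sym)
    have pm: "MP r lo h (X \<inter> ?V') (Y \<inter> ?V')" using proj_hi[OF mono m] .
    have pm2: "MP r lo h (X2 \<inter> ?V') (Y2 \<inter> ?V')" using proj_hi[OF mono m2] .
    have p: "X \<inter> ?V' \<in> XsG r lo h" using pm unfolding XsG_def by blast
    have p2: "X2 \<inter> ?V' \<in> XsG r lo h" using pm2 unfolding XsG_def by blast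
    have XV: "X \<subseteq> ?V" "X2 \<subseteq> ?V" "Y \<subseteq> ?V" "Y2 \<subseteq> ?V" using MP_subV[OF m] MP_subV[OF m2] by auto
    have split: "?V \<subseteq> ?V' \<union> ?C"
    proof
      fix w assume "w \<in> ?V"
      thus "w \<in> ?V' \<union> ?C" unfolding colG_def by (cases w) auto
    qed
    have fin: "finite (Y \<inter> ?C)" "finite (Y2 \<inter> ?C)"
      using finite_arcsG[of r lo "Suc h"] XV by (auto intro: finite_subset)
    have e1: "(X \<inter> ?V' \<subseteq> X2 \<inter> ?V') \<longleftrightarrow> (\<forall>i<d. f' (X \<inter> ?V') i \<le> f' (X2 \<inter> ?V') i)"
      using bspec[OF bspec[OF emb[unfolded embX_def] p] p2] .
    have e2: "(\<forall>i<Suc d. f X i \<le> f X2 i) \<longleftrightarrow>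
       (\<forall>i<d. f' (X \<inter> ?V') i \<le> f' (X2 \<inter> ?V') i) \<and> card (Y2 \<inter> ?C) \<le> card (Y \<inter> ?C)"
      unfolding all_less_Suc f_def YY YY2 by simp
    show "X \<subseteq> X2 \<longleftrightarrow> (\<forall>i<Suc d. f X i \<le> f X2 i)"
    proof
      assume s: "X \<subseteq> X2"
      have "Y2 \<subseteq> Y" using mop_le_iff_Y[OF m m2 s] .
      hence "card (Y2 \<inter> ?C) \<le> card (Y \<inter> ?C)" using fin by (intro card_mono) auto
      moreover have "X \<inter> ?V' \<subseteq> X2 \<inter> ?V'" using s by blast
      ultimately show "\<forall>i<Suc d. f X i \<le> f X2 i" using e1 e2 by blast
    next
      assume "\<forall>i<Suc d. f X i \<le> f X2 i"
      hence s1: "X \<inter> ?V' \<subseteq> X2 \<inter> ?V'" and c: "card (Y2 \<inter> ?C) \<le> card (Y \<inter> ?C)"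
        using e1 e2 by blast+
      have s2: "Y2 \<inter> ?C \<subseteq> Y \<inter> ?C"
        using card_le_iff_sub[OF fin(2) fin(1)] col_comparable[OF mono m m2] c by blast
      have s3: "Y2 \<inter> ?V' \<subseteq> Y \<inter> ?V'"
      proof -
        have "Y2 \<inter> ?V' = Yop ?V' (econd r) (X2 \<inter> ?V')" using mop_iff[THEN iffD1, OF pm2, THEN conjunct2] .
        also have "\<dots> \<subseteq> Yop ?V' (econd r) (X \<inter> ?V')" using s1 by (rule Yop_anti)
        also have "\<dots> = Y \<inter> ?V'" using mop_iff[THEN iffD1, OF pm, THEN conjunct2] by (rule sym)
        finally show ?thesis .
      qed
      show "X \<subseteq> X2"
      proof
        fix u assume uX: "u \<in> X"
        show "u \<in> X2"
        proof (rule ccontr)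
          assume "u \<notin> X2"
          then obtain y where yY2: "y \<in> Y2" and uy: "u = y \<or> econd r u y"
            using MP_X[OF m2, of u] XV uX by blast
          have "y \<in> ?V' \<union> ?C" using yY2 XV split by blast
          hence "y \<in> Y" using s2 s3 yY2 by blast
          thus False using MP_orth[OF m uX] uy by blast
        qed
      qed
    qed
  qed
  thus ?thesis by blast
qed

definition bs :: "(nat \<Rightarrow> nat) \<Rightarrow> nat \<Rightarrow> nat \<Rightarrow> nat \<Rightarrow> nat" where
  "bs r lo hi x = card {y \<in> {lo..hi}. r y = r x}"

lemma UB_aux:
  assumes mono: "mono r"
  shows "\<forall>lo hi x. hi - lo = k \<longrightarrow> lo \<le> hi \<longrightarrow> x \<in> {lo..hi} \<longrightarrow>
     (\<forall>y\<in>{lo..hi}. bs r lo hi y \<le> bs r lo hi x) \<longrightarrow>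
     (\<exists>f. embX (XsG r lo hi) (Suc hi - lo - bs r lo hi x) f)"
proof (induction k rule: less_induct)
  case (less k)
  show ?case
  proof (intro allI impI)
    fix lo hi x
    assume k: "hi - lo = k" and lohi: "lo \<le> hi" and x: "x \<in> {lo..hi}"
      and mx: "\<forall>y\<in>{lo..hi}. bs r lo hi y \<le> bs r lo hi x"
    show "\<exists>f. embX (XsG r lo hi) (Suc hi - lo - bs r lo hi x) f"
    proof (cases "r lo = r hi")
      case True
      have "arcsG r lo hi = {}"
      proof (rule ccontr)
        assume "arcsG r lo hi \<noteq> {}"
        then obtain w where w: "w \<in> arcsG r lo hi" by blast
        obtain a b where "w = (a,b)" by (cases w)
        hence ab: "(a,b) \<in> arcsG r lo hi" using w by simp
        hence "lo \<le> a" "a \<le> b" "b \<le> hi" "r a \<noteq> r b" by auto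
        hence "r lo \<le> r a" "r a \<le> r b" "r b \<le> r hi" using monoD[OF mono] by blast+
        thus False using True \<open>r a \<noteq> r b\<close> by simp
      qed
      hence "\<And>X. X \<in> XsG r lo hi \<Longrightarrow> X = {}" unfolding XsG_def using MP_subV by blast
      hence "embX (XsG r lo hi) (Suc hi - lo - bs r lo hi x) (\<lambda>_ _. 0)" unfolding embX_def by auto
      thus ?thesis by blast
    next
      case False
      hence lh: "lo < hi" using lohi by (cases "lo = hi") auto
      show ?thesis
      proof (cases "r x = r lo")
        case False
        have xs: "x \<in> {Suc lo..hi}" using x False by (cases "x = lo") auto
        have blk: "{y \<in> {Suc lo..hi}. r y = r x} = {y \<in> {lo..hi}. r y = r x}"
          using False by (auto simp: le_Suc_eq) (metis le_antisym not_less_eq_eq)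
        have bsx: "bs r (Suc lo) hi x = bs r lo hi x" unfolding bs_def blk ..
        have mx': "\<forall>y\<in>{Suc lo..hi}. bs r (Suc lo) hi y \<le> bs r (Suc lo) hi x"
        proof
          fix y assume y: "y \<in> {Suc lo..hi}"
          have "bs r (Suc lo) hi y \<le> bs r lo hi y" unfolding bs_def by (rule card_mono) auto
          also have "\<dots> \<le> bs r lo hi x" using mx y by auto
          finally show "bs r (Suc lo) hi y \<le> bs r (Suc lo) hi x" using bsx by simp
        qed
        have "bs r lo hi x \<le> hi - lo"
        proof -
          have "bs r lo hi x = card {y \<in> {Suc lo..hi}. r y = r x}" unfolding bs_def blk ..
          also have "\<dots> \<le> card {Suc lo..hi}" by (rule card_mono) auto
          finally show ?thesis by simp
        qed
        moreover have kk: "hi - Suc lo < k" using k lh by simp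
        moreover obtain f' where "embX (XsG r (Suc lo) hi) (Suc hi - Suc lo - bs r (Suc lo) hi x) f'"
        proof -
          have A: "hi - Suc lo = hi - Suc lo \<longrightarrow> Suc lo \<le> hi \<longrightarrow> x \<in> {Suc lo..hi} \<longrightarrow>
             (\<forall>y\<in>{Suc lo..hi}. bs r (Suc lo) hi y \<le> bs r (Suc lo) hi x) \<longrightarrow>
             (\<exists>f. embX (XsG r (Suc lo) hi) (Suc hi - Suc lo - bs r (Suc lo) hi x) f)"
            using less.IH[OF kk] by blast
          have "Suc lo \<le> hi" using lh by simp
          thus ?thesis using A xs mx' that by blast
        qed
        ultimately obtain f where "embX (XsG r lo hi) (Suc (Suc hi - Suc lo - bs r lo hi x)) f"
          using step_lo[OF mono] bsx by metis
        moreover have "Suc (Suc hi - Suc lo - bs r lo hi x) = Suc hi - lo - bs r lo hi x"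
          using \<open>bs r lo hi x \<le> hi - lo\<close> lh by simp
        ultimately show ?thesis by metis
      next
        case True
        obtain h where h: "hi = Suc h" using lh by (cases hi) auto
        have xh: "r x \<noteq> r hi" using True \<open>r lo \<noteq> r hi\<close> by simp
        have xs: "x \<in> {lo..h}" using x xh h by (cases "x = hi") auto
        have blk: "{y \<in> {lo..h}. r y = r x} = {y \<in> {lo..hi}. r y = r x}"
          using xh h by (auto simp: le_Suc_eq)
        have bsx: "bs r lo h x = bs r lo hi x" unfolding bs_def blk ..
        have mx': "\<forall>y\<in>{lo..h}. bs r lo h y \<le> bs r lo h x"
        proof
          fix y assume y: "y \<in> {lo..h}"
          have "bs r lo h y \<le> bs r lo hi y" unfolding bs_def using h by (intro card_mono) auto
          also have "\<dots> \<le> bs r lo hi x" using mx y h by auto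
          finally show "bs r lo h y \<le> bs r lo h x" using bsx by simp
        qed
        have "bs r lo hi x \<le> hi - lo"
        proof -
          have "bs r lo hi x = card {y \<in> {lo..h}. r y = r x}" unfolding bs_def blk ..
          also have "\<dots> \<le> card {lo..h}" by (rule card_mono) auto
          finally show ?thesis using h lh by simp
        qed
        moreover have kk: "h - lo < k" using k lh h by simp
        moreover obtain f' where "embX (XsG r lo h) (Suc h - lo - bs r lo h x) f'"
        proof -
          have A: "h - lo = h - lo \<longrightarrow> lo \<le> h \<longrightarrow> x \<in> {lo..h} \<longrightarrow>
             (\<forall>y\<in>{lo..h}. bs r lo h y \<le> bs r lo h x) \<longrightarrow>
             (\<exists>f. embX (XsG r lo h) (Suc h - lo - bs r lo h x) f)"
            using less.IH[OF kk] by blast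
          have "lo \<le> h" using lh h by simp
          thus ?thesis using A xs mx' that by blast
        qed
        ultimately obtain f where "embX (XsG r lo (Suc h)) (Suc (Suc h - lo - bs r lo hi x)) f"
          using step_hi[OF mono] bsx by metis
        moreover have "Suc (Suc h - lo - bs r lo hi x) = Suc hi - lo - bs r lo hi x"
          using \<open>bs r lo hi x \<le> hi - lo\<close> lh h by simp
        ultimately show ?thesis using h by metis
      qed
    qed
  qed
qed



definition LBinv :: "(nat \<Rightarrow> nat) \<Rightarrow> nat \<Rightarrow> nat \<Rightarrow> (nat \<times> nat) set \<Rightarrow> nat set \<Rightarrow> bool" where
  "LBinv r lo hi F En \<longleftrightarrow> F \<subseteq> arcsG r lo hi \<and> (\<forall>u\<in>F. \<forall>v\<in>F. \<not> econd r u v) \<and>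
     En = {x\<in>{lo..hi}. \<forall>b. (x,b) \<notin> F} \<and>
     (\<forall>e\<in>En. \<forall>a b. (a,b) \<in> F \<longrightarrow> \<not> (a < e \<and> e < b \<and> r a \<noteq> r e \<and> r b \<noteq> r e)) \<and>
     (\<forall>a b a'. (a,b) \<in> F \<longrightarrow> a' \<in> En \<longrightarrow> r a' = r a \<longrightarrow> \<not> a' < a) \<and>
     card F + card En = Suc hi - lo \<and> (\<exists>x\<in>{lo..hi}. card En \<le> bs r lo hi x)"

lemma LB_aux:
  assumes mono: "mono r" and lohi: "lo \<le> hi"
  shows "\<exists>F En. LBinv r lo hi F En"
  using lohi
proof (induction hi rule: dec_induct)
  case base
  have s: "{y \<in> {lo..lo}. r y = r lo} = {lo}" by auto
  have "bs r lo lo lo = 1" unfolding bs_def s by simp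
  hence "LBinv r lo lo {} {lo}"
    unfolding LBinv_def by (auto intro!: bexI[of _ lo])
  thus ?case by blast
next
  case (step n)
  then obtain F En where inv: "LBinv r lo n F En" by blast
  let ?h = "Suc n"
  have Fa: "F \<subseteq> arcsG r lo n" and ind: "\<forall>u\<in>F. \<forall>v\<in>F. \<not> econd r u v"
    and Eneq: "En = {x\<in>{lo..n}. \<forall>b. (x,b) \<notin> F}"
    and unc: "\<forall>e\<in>En. \<forall>a b. (a,b) \<in> F \<longrightarrow> \<not> (a < e \<and> e < b \<and> r a \<noteq> r e \<and> r b \<noteq> r e)"
    and ini: "\<forall>a b a'. (a,b) \<in> F \<longrightarrow> a' \<in> En \<longrightarrow> r a' = r a \<longrightarrow> \<not> a' < a"
    and cnt: "card F + card En = Suc n - lo" and bsx: "\<exists>x\<in>{lo..n}. card En \<le> bs r lo n x"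
    using inv unfolding LBinv_def by blast+
  have finF: "finite F" using Fa finite_arcsG finite_subset by blast
  have EnS: "En \<subseteq> {lo..n}" using Eneq by blast
  have finE: "finite En" using EnS finite_subset by blast
  have Fb: "\<And>a b. (a,b) \<in> F \<Longrightarrow> lo \<le> a \<and> a < b \<and> b \<le> n \<and> r a \<noteq> r b" using Fa by auto
  have hE: "?h \<notin> En" using EnS by auto
  let ?C = "{x\<in>En. r x \<noteq> r ?h}"
  show ?case
  proof (cases "?C = {}")
    case True
    let ?En = "insert ?h En"
    have "LBinv r lo ?h F ?En"
      unfolding LBinv_def
    proof (intro conjI)
      show "F \<subseteq> arcsG r lo ?h" using Fa by (auto simp: arcsG_def)
      show "\<forall>u\<in>F. \<forall>v\<in>F. \<not> econd r u v" by (rule ind)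
      show "?En = {x\<in>{lo..?h}. \<forall>b. (x,b) \<notin> F}"
      proof (rule set_eqI)
        fix x
        show "x \<in> ?En \<longleftrightarrow> x \<in> {x\<in>{lo..?h}. \<forall>b. (x,b) \<notin> F}"
        proof (cases "x = ?h")
          case True
          have "\<forall>b. (x,b) \<notin> F" using Fb True by fastforce
          thus ?thesis using True step.hyps(1) by simp
        next
          case False
          have "x \<in> {lo..?h} \<longleftrightarrow> x \<in> {lo..n}" using False by auto
          thus ?thesis using False Eneq by blast
        qed
      qed
      show "\<forall>e\<in>?En. \<forall>a b. (a,b) \<in> F \<longrightarrow> \<not> (a < e \<and> e < b \<and> r a \<noteq> r e \<and> r b \<noteq> r e)"
        using unc Fb by fastforce
      show "\<forall>a b a'. (a,b) \<in> F \<longrightarrow> a' \<in> ?En \<longrightarrow> r a' = r a \<longrightarrow> \<not> a' < a"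
        using ini Fb by fastforce
      show "card F + card ?En = Suc ?h - lo" using cnt hE finE step.hyps(1) by simp
      show "\<exists>x\<in>{lo..?h}. card ?En \<le> bs r lo ?h x"
      proof (rule bexI[of _ ?h])
        have "?En \<subseteq> {y \<in> {lo..?h}. r y = r ?h}" using True EnS step.hyps(1) by auto
        thus "card ?En \<le> bs r lo ?h ?h" unfolding bs_def by (intro card_mono) auto
      qed (use step.hyps(1) in auto)
    qed
    thus ?thesis by blast
  next
    case False
    have finC: "finite ?C" using finE by simp
    define e0 where "e0 = Max ?C"
    have e0C: "e0 \<in> ?C" unfolding e0_def using Max_in[OF finC False] .
    have e0max: "\<And>x. x \<in> ?C \<Longrightarrow> x \<le> e0" unfolding e0_def using Max_ge[OF finC] by blast
    let ?D = "{x\<in>En. r x = r e0}"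
    have finD: "finite ?D" using finE by simp
    have Dne: "?D \<noteq> {}" using e0C by blast
    define e where "e = Min ?D"
    have eD: "e \<in> ?D" unfolding e_def using Min_in[OF finD Dne] .
    have emin: "\<And>x. x \<in> ?D \<Longrightarrow> e \<le> x" unfolding e_def using Min_le[OF finD] by blast
    have eE: "e \<in> En" and re: "r e = r e0" using eD by auto
    have reh: "r e \<noteq> r ?h" using re e0C by auto
    have eS: "lo \<le> e" "e \<le> n" using eE EnS by auto
    have eout: "\<And>b. (e,b) \<notin> F" using eE Eneq by blast
    let ?F = "insert (e, ?h) F"
    let ?En = "insert ?h (En - {e})"
    have newF: "(e, ?h) \<notin> F" using Fb by fastforce
    have "LBinv r lo ?h ?F ?En"
      unfolding LBinv_def
    proof (intro conjI)
      show "?F \<subseteq> arcsG r lo ?h" using Fa eS reh by (auto simp: arcsG_def)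
      have n1: "\<not> econd r (e, ?h) (a,b)" if ab: "(a,b) \<in> F" for a b
      proof
        assume ec: "econd r (e, ?h) (a,b)"
        have abF: "lo \<le> a" "a < b" "b \<le> n" "r a \<noteq> r b" using Fb[OF ab] by auto
        show False
        proof (cases "r e = r a")
          case True
          hence "e \<le> a" using ec by auto
          moreover have "a \<noteq> e" using eout ab by blast
          ultimately have "e < a" by simp
          thus False using ini ab eE True by metis
        next
          case False
          hence "a < e \<and> e < b \<and> r e \<noteq> r b" using ec by auto
          thus False using unc eE ab False by metis
        qed
      qed
      have n2: "\<not> econd r (a,b) (e, ?h)" if ab: "(a,b) \<in> F" for a b
        using Fb[OF ab] by auto
      show "\<forall>u\<in>?F. \<forall>v\<in>?F. \<not> econd r u v"
      proof (intro ballI)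
        fix u v assume u: "u \<in> ?F" and v: "v \<in> ?F"
        show "\<not> econd r u v"
        proof (cases "u = (e, ?h)")
          case True
          show ?thesis
          proof (cases "v = (e, ?h)")
            case True thus ?thesis using \<open>u = (e, ?h)\<close> by (simp add: econd_def)
          next
            case False
            hence "v \<in> F" using v by blast
            thus ?thesis using n1 True by (cases v) auto
          qed
        next
          case False
          hence uF: "u \<in> F" using u by blast
          show ?thesis
          proof (cases "v = (e, ?h)")
            case True thus ?thesis using n2 uF by (cases u) auto
          next
            case False
            hence "v \<in> F" using v by blast
            thus ?thesis using ind uF by blast
          qed
        qed
      qed
      show "?En = {x\<in>{lo..?h}. \<forall>b. (x,b) \<notin> ?F}"
      proof (rule set_eqI)
        fix x
        show "x \<in> ?En \<longleftrightarrow> x \<in> {x\<in>{lo..?h}. \<forall>b. (x,b) \<notin> ?F}"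
        proof
          assume x: "x \<in> ?En"
          show "x \<in> {x\<in>{lo..?h}. \<forall>b. (x,b) \<notin> ?F}"
          proof (cases "x = ?h")
            case True thus ?thesis using step.hyps(1) Fb eS by fastforce
          next
            case False
            hence "x \<in> En" "x \<noteq> e" using x by auto
            thus ?thesis using Eneq by auto
          qed
        next
          assume x: "x \<in> {x\<in>{lo..?h}. \<forall>b. (x,b) \<notin> ?F}"
          show "x \<in> ?En"
          proof (cases "x = ?h")
            case True thus ?thesis by simp
          next
            case False
            hence "x \<in> {lo..n}" using x by auto
            moreover have "x \<noteq> e" using x by auto
            ultimately show ?thesis using x Eneq by auto
          qed
        qed
      qed
      show "\<forall>e'\<in>?En. \<forall>a b. (a,b) \<in> ?F \<longrightarrow> \<not> (a < e' \<and> e' < b \<and> r a \<noteq> r e' \<and> r b \<noteq> r e')"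
      proof (intro ballI allI impI notI)
        fix e' a b assume e': "e' \<in> ?En" and ab: "(a,b) \<in> ?F"
          and c: "a < e' \<and> e' < b \<and> r a \<noteq> r e' \<and> r b \<noteq> r e'"
        show False
        proof (cases "e' = ?h")
          case True
          have "b \<le> ?h"
          proof (cases "(a,b) = (e, ?h)")
            case False
            hence "(a,b) \<in> F" using ab by blast
            thus ?thesis using Fb by fastforce
          qed simp
          thus False using c True by simp
        next
          case False
          hence e'E: "e' \<in> En" "e' \<noteq> e" using e' by auto
          show False
          proof (cases "(a,b) = (e, ?h)")
            case True
            hence ab': "a = e" "b = ?h" by auto
            have "e' \<in> ?C" using e'E c ab' by auto
            hence "e' \<le> e0" by (rule e0max)
            hence "r e' \<le> r e0" using monoD[OF mono] by blast
            moreover have "r e \<le> r e'" using monoD[OF mono, of e e'] c ab' by simp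
            ultimately show False using re c ab' by simp
          next
            case False
            hence "(a,b) \<in> F" using ab by blast
            thus False using unc e'E c by blast
          qed
        qed
      qed
      show "\<forall>a b a'. (a,b) \<in> ?F \<longrightarrow> a' \<in> ?En \<longrightarrow> r a' = r a \<longrightarrow> \<not> a' < a"
      proof (intro allI impI notI)
        fix a b a' assume ab: "(a,b) \<in> ?F" and a': "a' \<in> ?En" and ra: "r a' = r a" and lt: "a' < a"
        show False
        proof (cases "(a,b) = (e, ?h)")
          case True
          hence "a = e" by simp
          hence "a' \<noteq> ?h" using lt eS by simp
          hence "a' \<in> En" using a' by auto
          hence "a' \<in> ?D" using ra \<open>a = e\<close> re by simp
          hence "e \<le> a'" by (rule emin)
          thus False using lt \<open>a = e\<close> by simp
        next
          case False
          hence abF: "(a,b) \<in> F" using ab by blast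
          hence "a' \<noteq> ?h" using lt Fb by fastforce
          hence "a' \<in> En" using a' by auto
          thus False using ini abF ra lt by blast
        qed
      qed
      show "card ?F + card ?En = Suc ?h - lo"
      proof -
        have "card ?F = Suc (card F)" using finF newF by simp
        moreover have "card ?En = card En"
        proof -
          have "?h \<notin> En - {e}" using hE by blast
          hence "card ?En = Suc (card (En - {e}))" using finE by simp
          also have "\<dots> = card En" using eE finE
            by (metis card_Suc_Diff1)
          finally show ?thesis .
        qed
        ultimately show ?thesis using cnt step.hyps(1) by simp
      qed
      show "\<exists>x\<in>{lo..?h}. card ?En \<le> bs r lo ?h x"
      proof -
        obtain x where x: "x \<in> {lo..n}" "card En \<le> bs r lo n x" using bsx by blast
        have "bs r lo n x \<le> bs r lo ?h x" unfolding bs_def by (intro card_mono) auto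
        moreover have "card ?En = card En"
        proof -
          have "?h \<notin> En - {e}" using hE by blast
          hence "card ?En = Suc (card (En - {e}))" using finE by simp
          also have "\<dots> = card En" using eE finE
            by (metis card_Suc_Diff1)
          finally show ?thesis .
        qed
        ultimately show ?thesis using x by (intro bexI[of _ x]) auto
      qed
    qed
    thus ?thesis by blast
  qed
qed



lemma indep_dim:
  assumes emb: "embeds_in_Rd (mop_lattice V E) mop_le d" and IV: "I \<subseteq> V" and fin: "finite I"
    and ind: "\<forall>u\<in>I. \<forall>v\<in>I. u \<noteq> v \<longrightarrow> \<not> E u v"
  shows "card I \<le> d"
proof (rule ccontr)
  assume "\<not> card I \<le> d"
  hence lt: "d < card I" by simp
  obtain f :: "_ \<Rightarrow> nat \<Rightarrow> real" where
    f: "\<forall>x\<in>mop_lattice V E. \<forall>y\<in>mop_lattice V E. mop_le x y \<longleftrightarrow> (\<forall>i<d. f x i \<le> f y i)"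
    using emb unfolding embeds_in_Rd_def by blast
  define A where "A = (\<lambda>u. (Xop V E (Yop V E {u}), Yop V E {u}))"
  define B where "B = (\<lambda>u. (Xop V E {u}, Yop V E (Xop V E {u})))"
  show False
  proof (rule std_example[OF f fin lt])
    fix u assume u: "u \<in> I"
    have uV: "{u} \<subseteq> V" using u IV by blast
    show "A u \<in> mop_lattice V E"
      unfolding A_def mop_lattice_def using YXY[OF uV, of E] by (simp add: mop_iff)
    show "B u \<in> mop_lattice V E"
      unfolding B_def mop_lattice_def using XYX[OF uV, of E] by (simp add: mop_iff)
    have "u \<in> Xop V E (Yop V E {u})" using uV unfolding Xop_def Yop_def by blast
    moreover have "u \<notin> Xop V E {u}" unfolding Xop_def by blast
    ultimately show "\<not> mop_le (A u) (B u)" unfolding A_def B_def mop_le_def by auto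
  next
    fix u v assume u: "u \<in> I" and v: "v \<in> I" and uv: "u \<noteq> v"
    have "v \<in> Yop V E {u}" using v IV ind u uv unfolding Yop_def by blast
    hence "Xop V E (Yop V E {u}) \<subseteq> Xop V E {v}" unfolding Xop_def by blast
    thus "mop_le (A u) (B v)" unfolding A_def B_def mop_le_def by simp
  qed
qed

section \<open>Compositions\<close>

definition ridx :: "nat list \<Rightarrow> nat \<Rightarrow> nat" where
  "ridx \<alpha> a = card {i. i < length \<alpha> \<and> sum_list (take (Suc i) \<alpha>) < a}"

lemma ridx_mono: "mono (ridx \<alpha>)"
proof (rule monoI)
  fix a b :: nat assume "a \<le> b"
  thus "ridx \<alpha> a \<le> ridx \<alpha> b" unfolding ridx_def
    by (intro card_mono) (auto intro: finite_subset[of _ "{..<length \<alpha>}"])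
qed

lemma P_mono: "i \<le> j \<Longrightarrow> sum_list (take i \<alpha>) \<le> sum_list (take j (\<alpha>::nat list))"
proof -
  assume "i \<le> j"
  then obtain k where "j = i + k" using le_Suc_ex by blast
  thus ?thesis by (simp add: take_add)
qed

lemma P_Suc: "i < length \<alpha> \<Longrightarrow> sum_list (take (Suc i) \<alpha>) = sum_list (take i \<alpha>) + (\<alpha>::nat list) ! i"
  by (simp add: take_Suc_conv_app_nth)

lemma region_ridx:
  assumes i: "i < length \<alpha>" and a: "a \<in> alpha_region \<alpha> i"
  shows "ridx \<alpha> a = i"
proof -
  have a1: "sum_list (take i \<alpha>) < a" and a2: "a \<le> sum_list (take (Suc i) \<alpha>)"
    using a unfolding alpha_region_def by auto
  have "{j. j < length \<alpha> \<and> sum_list (take (Suc j) \<alpha>) < a} = {..<i}"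
  proof (rule set_eqI)
    fix j
    show "j \<in> {j. j < length \<alpha> \<and> sum_list (take (Suc j) \<alpha>) < a} \<longleftrightarrow> j \<in> {..<i}"
    proof
      assume "j \<in> {j. j < length \<alpha> \<and> sum_list (take (Suc j) \<alpha>) < a}"
      hence j: "sum_list (take (Suc j) \<alpha>) < a" by simp
      show "j \<in> {..<i}"
      proof (rule ccontr)
        assume "j \<notin> {..<i}"
        hence "Suc i \<le> Suc j" by simp
        hence "sum_list (take (Suc i) \<alpha>) \<le> sum_list (take (Suc j) \<alpha>)" by (rule P_mono)
        thus False using j a2 by simp
      qed
    next
      assume "j \<in> {..<i}"
      hence "Suc j \<le> i" "j < length \<alpha>" using i by auto
      hence "sum_list (take (Suc j) \<alpha>) \<le> sum_list (take i \<alpha>)" "j < length \<alpha>" using P_mono by auto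
      thus "j \<in> {j. j < length \<alpha> \<and> sum_list (take (Suc j) \<alpha>) < a}" using a1 by simp
    qed
  qed
  thus ?thesis unfolding ridx_def by simp
qed

lemma ex_region:
  assumes a: "1 \<le> a" "a \<le> sum_list \<alpha>"
  shows "\<exists>i<length \<alpha>. a \<in> alpha_region \<alpha> i"
proof -
  have ne: "\<alpha> \<noteq> []" using a by auto
  let ?J = "{j. j < length \<alpha> \<and> a \<le> sum_list (take (Suc j) \<alpha>)}"
  have "length \<alpha> - 1 \<in> ?J" using ne a by simp
  hence Jne: "?J \<noteq> {}" by blast
  define i where "i = (LEAST j. j \<in> ?J)"
  have iJ: "i \<in> ?J" unfolding i_def using Jne by (metis (mono_tags, lifting) LeastI ex_in_conv)
  have "sum_list (take i \<alpha>) < a"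
  proof (cases i)
    case 0 thus ?thesis using a by simp
  next
    case (Suc i')
    have "i' \<notin> ?J" using Suc unfolding i_def by (metis Least_le Suc_n_not_le_n i_def)
    moreover have "i' < length \<alpha>" using iJ Suc by simp
    ultimately show ?thesis using Suc by simp
  qed
  thus ?thesis using iJ unfolding alpha_region_def by auto
qed

lemma same_region_iff:
  assumes "1 \<le> a" "a \<le> sum_list \<alpha>" "1 \<le> b" "b \<le> sum_list \<alpha>"
  shows "same_region \<alpha> a b \<longleftrightarrow> ridx \<alpha> a = ridx \<alpha> b"
proof
  assume "same_region \<alpha> a b"
  then obtain i where "i < length \<alpha>" "a \<in> alpha_region \<alpha> i" "b \<in> alpha_region \<alpha> i"
    unfolding same_region_def by blast
  thus "ridx \<alpha> a = ridx \<alpha> b" using region_ridx by metis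
next
  assume eq: "ridx \<alpha> a = ridx \<alpha> b"
  obtain i where i: "i < length \<alpha>" "a \<in> alpha_region \<alpha> i" using ex_region assms(1,2) by blast
  obtain j where j: "j < length \<alpha>" "b \<in> alpha_region \<alpha> j" using ex_region assms(3,4) by blast
  have "i = j" using region_ridx[OF i] region_ridx[OF j] eq by simp
  thus "same_region \<alpha> a b" unfolding same_region_def using i j by blast
qed

lemma arcs_eq: "alpha_arcs \<alpha> = arcsG (ridx \<alpha>) 1 (sum_list \<alpha>)"
proof (rule set_eqI)
  fix w :: "nat \<times> nat"
  obtain a b where w: "w = (a,b)" by (cases w)
  show "w \<in> alpha_arcs \<alpha> \<longleftrightarrow> w \<in> arcsG (ridx \<alpha>) 1 (sum_list \<alpha>)"
  proof (cases "1 \<le> a \<and> a < b \<and> b \<le> sum_list \<alpha>")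
    case True
    hence "same_region \<alpha> a b \<longleftrightarrow> ridx \<alpha> a = ridx \<alpha> b" by (intro same_region_iff) auto
    thus ?thesis using True w unfolding alpha_arcs_def by simp
  next
    case False thus ?thesis using w unfolding alpha_arcs_def by auto
  qed
qed

lemma edge_eq:
  assumes x: "x \<in> alpha_arcs \<alpha>" and y: "y \<in> alpha_arcs \<alpha>"
  shows "alpha_edge \<alpha> x y = econd (ridx \<alpha>) x y"
proof -
  obtain a1 b1 where xa: "x = (a1,b1)" by (cases x)
  obtain a2 b2 where ya: "y = (a2,b2)" by (cases y)
  have r1: "1 \<le> a1" "a1 < b1" "b1 \<le> sum_list \<alpha>" using x xa unfolding alpha_arcs_def by auto
  have r2: "1 \<le> a2" "a2 < b2" "b2 \<le> sum_list \<alpha>" using y ya unfolding alpha_arcs_def by auto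
  have s1: "same_region \<alpha> a1 a2 \<longleftrightarrow> ridx \<alpha> a1 = ridx \<alpha> a2" using r1 r2 by (intro same_region_iff) auto
  have s2: "same_region \<alpha> a1 b2 \<longleftrightarrow> ridx \<alpha> a1 = ridx \<alpha> b2" using r1 r2 by (intro same_region_iff) auto
  show ?thesis unfolding alpha_edge_def using x y xa ya s1 s2 by (simp add: Let_def)
qed

lemma Tam_eq: "Tam \<alpha> = mop_lattice (arcsG (ridx \<alpha>) 1 (sum_list \<alpha>)) (econd (ridx \<alpha>))"
proof -
  have "max_orthogonal_pair (alpha_arcs \<alpha>) (alpha_edge \<alpha>) =
      max_orthogonal_pair (alpha_arcs \<alpha>) (econd (ridx \<alpha>))"
    by (intro ext mop_cong edge_eq)
  thus ?thesis unfolding Tam_def mop_lattice_def arcs_eq[symmetric] by simp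
qed

lemma block_eq:
  assumes i: "i < length \<alpha>"
  shows "{y \<in> {1..sum_list \<alpha>}. ridx \<alpha> y = i} = alpha_region \<alpha> i"
proof (rule set_eqI)
  fix y
  show "y \<in> {y \<in> {1..sum_list \<alpha>}. ridx \<alpha> y = i} \<longleftrightarrow> y \<in> alpha_region \<alpha> i"
  proof
    assume "y \<in> {y \<in> {1..sum_list \<alpha>}. ridx \<alpha> y = i}"
    hence y: "1 \<le> y" "y \<le> sum_list \<alpha>" "ridx \<alpha> y = i" by auto
    obtain j where j: "j < length \<alpha>" "y \<in> alpha_region \<alpha> j" using ex_region y(1,2) by blast
    have "j = i" using region_ridx[OF j] y(3) by simp
    thus "y \<in> alpha_region \<alpha> i" using j by simp
  next
    assume y: "y \<in> alpha_region \<alpha> i"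
    have "sum_list (take (Suc i) \<alpha>) \<le> sum_list (take (length \<alpha>) \<alpha>)" using i by (intro P_mono) simp
    hence "y \<le> sum_list \<alpha>" using y unfolding alpha_region_def by auto
    moreover have "1 \<le> y" using y unfolding alpha_region_def by auto
    ultimately show "y \<in> {y \<in> {1..sum_list \<alpha>}. ridx \<alpha> y = i}" using region_ridx[OF i y] by simp
  qed
qed

lemma card_region: "i < length \<alpha> \<Longrightarrow> card (alpha_region \<alpha> i) = \<alpha> ! i"
  unfolding alpha_region_def by (simp add: P_Suc)

lemma bs_eq:
  assumes x: "x \<in> {1..sum_list \<alpha>}"
  shows "ridx \<alpha> x < length \<alpha> \<and> bs (ridx \<alpha>) 1 (sum_list \<alpha>) x = \<alpha> ! ridx \<alpha> x"
proof -
  obtain j where j: "j < length \<alpha>" "x \<in> alpha_region \<alpha> j" using ex_region x by auto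
  have rj: "ridx \<alpha> x = j" using region_ridx[OF j] .
  show ?thesis unfolding bs_def rj using block_eq[OF j(1)] card_region[OF j(1)] j(1) by simp
qed

theorem proposition4p11:
  fixes \<alpha> :: "nat list" and n :: nat
  assumes "n > 0" and "is_composition \<alpha> n"
  shows "order_dimension (Tam \<alpha>) mop_le = n - Max (set \<alpha>)"
proof -
  have pos: "\<forall>p\<in>set \<alpha>. 0 < p" and nsum: "sum_list \<alpha> = n"
    using assms(2) unfolding is_composition_def by auto
  let ?r = "ridx \<alpha>"
  let ?M = "Max (set \<alpha>)"
  let ?V = "arcsG ?r 1 n"
  have ne: "\<alpha> \<noteq> []" using assms(1) nsum by auto
  have T: "Tam \<alpha> = mop_lattice ?V (econd ?r)" using Tam_eq[of \<alpha>] nsum by simp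
  have bsle: "\<And>y. y \<in> {1..n} \<Longrightarrow> bs ?r 1 n y \<le> ?M"
  proof -
    fix y assume y: "y \<in> {1..n}"
    have "?r y < length \<alpha> \<and> bs ?r 1 n y = \<alpha> ! ?r y" using bs_eq[of y \<alpha>] y nsum by simp
    thus "bs ?r 1 n y \<le> ?M" by simp
  qed
  obtain i0 where i0: "i0 < length \<alpha>" "\<alpha> ! i0 = ?M"
    using Max_in[of "set \<alpha>"] ne by (metis List.finite_set in_set_conv_nth set_empty)
  define x0 where "x0 = sum_list (take i0 \<alpha>) + 1"
  have "0 < \<alpha> ! i0" using pos i0(1) by simp
  hence x0r: "x0 \<in> alpha_region \<alpha> i0" unfolding x0_def alpha_region_def using P_Suc[OF i0(1)] by simp
  have x0S: "x0 \<in> {1..n}" using block_eq[OF i0(1)] x0r nsum by auto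
  have bsx0: "bs ?r 1 n x0 = ?M"
    using bs_eq[of x0 \<alpha>] x0S nsum region_ridx[OF i0(1) x0r] i0(2) by simp
  have up: "embeds_in_Rd (Tam \<alpha>) mop_le (n - ?M)"
  proof -
    have A: "n - 1 = n - 1 \<longrightarrow> 1 \<le> n \<longrightarrow> x0 \<in> {1..n} \<longrightarrow>
       (\<forall>y\<in>{1..n}. bs ?r 1 n y \<le> bs ?r 1 n x0) \<longrightarrow>
       (\<exists>f. embX (XsG ?r 1 n) (Suc n - 1 - bs ?r 1 n x0) f)"
      using UB_aux[OF ridx_mono, of "n - 1" \<alpha>] by blast
    have "1 \<le> n" using assms(1) by simp
    moreover have "\<forall>y\<in>{1..n}. bs ?r 1 n y \<le> bs ?r 1 n x0" using bsle bsx0 by simp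
    ultimately have "\<exists>f. embX (XsG ?r 1 n) (Suc n - 1 - bs ?r 1 n x0) f"
      using A x0S by blast
    then obtain f where f: "embX (XsG ?r 1 n) (n - ?M) f" using bsx0 by auto
    define g where "g = (\<lambda>p :: (nat \<times> nat) set \<times> (nat \<times> nat) set. f (fst p))"
    have memX: "\<And>p. p \<in> Tam \<alpha> \<Longrightarrow> fst p \<in> XsG ?r 1 n"
      unfolding T mop_lattice_def XsG_def by auto
    have ord: "\<forall>p\<in>Tam \<alpha>. \<forall>q\<in>Tam \<alpha>. mop_le p q \<longleftrightarrow> (\<forall>i<n - ?M. g p i \<le> g q i)"
      using f memX unfolding embX_def mop_le_def g_def by blast
    have "inj_on g (Tam \<alpha>)"
    proof (rule inj_onI)
      fix p q assume p: "p \<in> Tam \<alpha>" and q: "q \<in> Tam \<alpha>" and eq: "g p = g q"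
      have "mop_le p q" "mop_le q p" using ord p q eq by auto
      hence fe: "fst p = fst q" unfolding mop_le_def by auto
      have "max_orthogonal_pair ?V (econd ?r) (fst p) (snd p)"
        "max_orthogonal_pair ?V (econd ?r) (fst q) (snd q)"
        using p q unfolding T mop_lattice_def by auto
      hence "snd p = snd q" using fe mop_unique by metis
      thus "p = q" using fe by (simp add: prod_eq_iff)
    qed
    thus ?thesis unfolding embeds_in_Rd_def using ord by blast
  qed
  have low: "n - ?M \<le> d" if e: "embeds_in_Rd (Tam \<alpha>) mop_le d" for d
  proof -
    obtain F En where inv: "LBinv ?r 1 n F En" using LB_aux[OF ridx_mono[of \<alpha>], of 1 n] assms(1) by auto
    have FV: "F \<subseteq> ?V" and ind: "\<forall>u\<in>F. \<forall>v\<in>F. \<not> econd ?r u v"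
      and cnt: "card F + card En = Suc n - 1" and bx: "\<exists>x\<in>{1..n}. card En \<le> bs ?r 1 n x"
      using inv unfolding LBinv_def by blast+
    have finF: "finite F" using FV finite_arcsG finite_subset by blast
    have "card En \<le> ?M" using bx bsle by fastforce
    hence "n - ?M \<le> card F" using cnt by simp
    also have "card F \<le> d"
      using indep_dim[of ?V "econd ?r" d F] e T FV finF ind by simp
    finally show ?thesis .
  qed
  show ?thesis unfolding order_dimension_def
    by (rule Least_equality) (use up low in auto)
qed


end
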